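(* Let $S=\operatorname{Sys}(A,B,C)$ be a $(U,X,Y)$-relation with $A$ bounded (so $C:X\to Y$ is bounded), and suppose $\|e^{At}\|\le ae^{-\alpha t}$ for all $t\ge0$, for some $a\ge1$ and $\alpha\in\mathbb{R}$. Then for all $\beta<\alpha$ the $\beta$-IS-$(0,1)$-gain $h(\beta)$ and the $\beta$-IO-$(0,1)$-gain $g(\beta)$ of $S$ satisfy $$h(\beta)\le\max\left(\frac{a\|B\|}{\alpha-\beta},\ \frac{a\|B\|\|A\|}{\alpha-\beta}+\|B\|\right),\qquad g(\beta)\le\max\left(\frac{a\|B\|\|C\|}{\alpha-\beta},\ \frac{a\|B\|\|A\|\|C\|}{\alpha-\beta}+\|B\|\|C\|\right).$$
   Context: A $(U,X,Y)$-relation is a subset of $C^0(\mathbb{R}_{\ge 0},U)\times C^0(\mathbb{R}_{\ge 0},X)\times C^0(\mathbb{R}_{\ge 0},Y)$. For $A$ generating a strongly continuous semigroup on $X$, bounded $B:U\to X$ and $C:\operatorname{Dom}(A)\to Y$ bounded in the graph norm, $\operatorname{Sys}(A,B,C)$ is the relation of all $(u,x,y)$ with $u\in C^0(\mathbb{R}_{\ge0},U)$, $x\in C^0(\mathbb{R}_{\ge0},\operatorname{Dom}(A))\cap C^1(\mathbb{R}_{\ge0},X)$, $y\in C^0(\mathbb{R}_{\ge0},Y)$, $\dot x=Ax+Bu$, $y=Cx$. Gains: fix $\beta\in\mathbb{R}$, $n,m\in\mathbb{Z}_{\ge0}$. Provided every $(u,x,y)\in S$ with $u\in C^n$ has $y\in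 C^m$, the $\beta$-IO-$(n,m)$-gain of $S$ is the infimum of all $\alpha\ge0$ for which there is a function $b:S\to\mathbb{R}_{\ge0}$ with $\|e^{\beta t}\partial_t^k y(t)\|\le\alpha\max_{0\le j\le n}\|e^{\beta s}\partial_s^j u(s)\|_{L^\infty([0,t],U)}+b(u,x,y)$ for all $k\in\{0,\dots,m\}$, $t\ge0$, and $(u,x,y)\in S$ with $u\in C^n$. The $\beta$-IS-$(n,m)$-gain is defined the same way with $\partial_t^k x(t)$ in place of $\partial_t^k y(t)$. *)

theory Defs
  imports "HOL-Analysis.Analysis"
begin

primrec blinfun_pow :: "('a::real_normed_vector \<Rightarrow>\<^sub>L 'a) \<Rightarrow> nat \<Rightarrow> ('a \<Rightarrow>\<^sub>L 'a)" where
  "blinfun_pow A 0 = id_blinfun"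
| "blinfun_pow A (Suc n) = A o\<^sub>L blinfun_pow A n"

definition blinfun_exp :: "('a::real_normed_vector \<Rightarrow>\<^sub>L 'a) \<Rightarrow> ('a \<Rightarrow>\<^sub>L 'a)" where
  "blinfun_exp A = (\<Sum>n. (1 / fact n) *\<^sub>R blinfun_pow A n)"

primrec hderiv :: "nat \<Rightarrow> (real \<Rightarrow> 'a::real_normed_vector) \<Rightarrow> real \<Rightarrow> 'a" where
  "hderiv 0 f = f"
| "hderiv (Suc k) f = (\<lambda>t. vector_derivative (hderiv k f) (at t within {0..}))"

definition Cn :: "nat \<Rightarrow> (real \<Rightarrow> 'a::real_normed_vector) \<Rightarrow> bool" where
  "Cn n f \<longleftrightarrow>
     (\<forall>k<n. \<forall>t\<ge>0. (hderiv k f has_vector_derivative hderiv (Suc k) f t) (at t within {0..}))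
     \<and> (\<forall>k\<le>n. continuous_on {0..} (hderiv k f))"

definition Sys ::
  "('x::real_normed_vector \<Rightarrow>\<^sub>L 'x) \<Rightarrow> ('u::real_normed_vector \<Rightarrow>\<^sub>L 'x) \<Rightarrow> ('x \<Rightarrow>\<^sub>L 'y::real_normed_vector)
     \<Rightarrow> ((real \<Rightarrow> 'u) \<times> (real \<Rightarrow> 'x) \<times> (real \<Rightarrow> 'y)) set" where
  "Sys A B C = {(u, x, y). Cn 0 u \<and> Cn 1 x \<and> Cn 0 y
      \<and> (\<forall>t\<ge>0. (x has_vector_derivative (A (x t) + B (u t))) (at t within {0..}))
      \<and> (\<forall>t\<ge>0. y t = C (x t))}"

text \<open>max_{0\<le>j\<le>n} \<parallel>e^{\<beta>s} \<partial>^j u(s)\<parallel>_{L^\<infinity>([0,t])}; for continuous data the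
  L^\<infinity> norm over [0,t] is the supremum over [0,t].\<close>
definition input_bound :: "real \<Rightarrow> nat \<Rightarrow> (real \<Rightarrow> 'a::real_normed_vector) \<Rightarrow> real \<Rightarrow> real" where
  "input_bound \<beta> n u t =
     Max ((\<lambda>j. SUP s\<in>{0..t}. norm (exp (\<beta> * s) *\<^sub>R hderiv j u s)) ` {0..n})"

text \<open>If the proviso (C^n inputs give C^m outputs) fails, the gain is undefined;
  we then set it to \<infinity>. The infimum of the empty set is \<infinity>.\<close>
definition gain :: "((real \<Rightarrow> 'u::real_normed_vector) \<times> (real \<Rightarrow> 'x) \<times> (real \<Rightarrow> 'y)) set
     \<Rightarrow> (((real \<Rightarrow> 'u) \<times> (real \<Rightarrow> 'x) \<times> (real \<Rightarrow> 'y)) \<Rightarrow> (real \<Rightarrow> 'w::real_normed_vector))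
     \<Rightarrow> real \<Rightarrow> nat \<Rightarrow> nat \<Rightarrow> ereal" where
  "gain S out \<beta> n m =
    (if (\<forall>p\<in>S. Cn n (fst p) \<longrightarrow> Cn m (out p)) then
       Inf (ereal ` {\<alpha>. \<alpha> \<ge> 0 \<and> (\<exists>b :: _ \<Rightarrow> real. (\<forall>p\<in>S. b p \<ge> 0) \<and>
          (\<forall>p\<in>S. Cn n (fst p) \<longrightarrow> (\<forall>k\<le>m. \<forall>t\<ge>0.
             norm (exp (\<beta> * t) *\<^sub>R hderiv k (out p) t) \<le> \<alpha> * input_bound \<beta> n (fst p) t + b p)))})
     else \<infinity>)"

definition IO_gain :: "((real \<Rightarrow> 'u::real_normed_vector) \<times> (real \<Rightarrow> 'x::real_normed_vector) \<times> (real \<Rightarrow> 'y::real_normed_vector)) set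
     \<Rightarrow> real \<Rightarrow> nat \<Rightarrow> nat \<Rightarrow> ereal" where
  "IO_gain S \<beta> n m = gain S (\<lambda>(u, x, y). y) \<beta> n m"

definition IS_gain :: "((real \<Rightarrow> 'u::real_normed_vector) \<times> (real \<Rightarrow> 'x::real_normed_vector) \<times> (real \<Rightarrow> 'y::real_normed_vector)) set
     \<Rightarrow> real \<Rightarrow> nat \<Rightarrow> nat \<Rightarrow> ereal" where
  "IS_gain S \<beta> n m = gain S (\<lambda>(u, x, y). x) \<beta> n m"

end

theory Submission
  imports Defs
begin

lemma bpow_scale: "blinfun_pow (t *\<^sub>R A) n = t ^ n *\<^sub>R blinfun_pow A n"
  by (induction n) (auto simp: bounded_bilinear.scaleR_left[OF bounded_bilinear_blinfun_compose]
      bounded_bilinear.scaleR_right[OF bounded_bilinear_blinfun_compose])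

lemma bpow_norm: "norm (blinfun_pow A n) \<le> norm A ^ n"
proof (induction n)
  case 0 then show ?case by (simp add: norm_blinfun_id_le)
next
  case (Suc n)
  have "norm (blinfun_pow A (Suc n)) \<le> norm A * norm (blinfun_pow A n)"
    by (simp add: norm_blinfun_compose)
  also have "\<dots> \<le> norm A * norm A ^ n" using Suc by (simp add: mult_left_mono)
  finally show ?case by simp
qed

lemma bcomp_assoc: "(f o\<^sub>L g) o\<^sub>L h = f o\<^sub>L (g o\<^sub>L h)"
  by (auto intro!: blinfun_eqI)

lemma bpow_comm: "A o\<^sub>L blinfun_pow A n = blinfun_pow A n o\<^sub>L A"
proof (induction n)
  case 0 then show ?case by (auto intro!: blinfun_eqI)
next
  case (Suc n)
  have "A o\<^sub>L blinfun_pow A (Suc n) = A o\<^sub>L (blinfun_pow A n o\<^sub>L A)"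
    using Suc by (simp add: bcomp_assoc)
  then show ?case by (simp add: bcomp_assoc)
qed

definition eterm :: "('a::real_normed_vector \<Rightarrow>\<^sub>L 'a) \<Rightarrow> real \<Rightarrow> nat \<Rightarrow> ('a \<Rightarrow>\<^sub>L 'a)" where
  "eterm A t i = (t ^ i / fact i) *\<^sub>R blinfun_pow A i"

lemma eterm_norm: "norm (eterm A t i) \<le> (\<bar>t\<bar> * norm A) ^ i / fact i"
proof -
  have "norm (eterm A t i) = \<bar>t\<bar> ^ i / fact i * norm (blinfun_pow A i)"
    by (simp add: eterm_def power_abs)
  also have "\<dots> \<le> \<bar>t\<bar> ^ i / fact i * norm A ^ i"
    by (intro mult_left_mono bpow_norm) auto
  finally show ?thesis by (simp add: power_mult_distrib)
qed

lemma eterm_summable: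
  fixes A :: "'a::banach \<Rightarrow>\<^sub>L 'a"
  shows "summable (eterm A t)"
  by (rule summable_comparison_test[OF _ summable_exp[of "\<bar>t\<bar> * norm A"]])
     (use eterm_norm in \<open>auto simp: divide_inverse mult.commute\<close>)

lemma bexp_eq: "blinfun_exp (t *\<^sub>R A) = suminf (eterm A t)"
  unfolding blinfun_exp_def eterm_def bpow_scale by (simp add: divide_inverse mult.commute)

lemma eterm_deriv:
  "((\<lambda>t. eterm A t i) has_vector_derivative ((of_nat i * t ^ (i - 1) / fact i) *\<^sub>R blinfun_pow A i)) (at t)"
  unfolding eterm_def
  by (auto intro!: derivative_eq_intros)

lemma bcomp_add: "A o\<^sub>L (X + Y) = (A o\<^sub>L X) + (A o\<^sub>L Y)"
  by (rule bounded_bilinear.add_right[OF bounded_bilinear_blinfun_compose])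

lemma bcomp_scale: "A o\<^sub>L (c *\<^sub>R X) = c *\<^sub>R (A o\<^sub>L X)"
  by (rule bounded_bilinear.scaleR_right[OF bounded_bilinear_blinfun_compose])

lemma bcomp_diff: "A o\<^sub>L (X - Y) = (A o\<^sub>L X) - (A o\<^sub>L Y)"
  by (rule bounded_bilinear.diff_right[OF bounded_bilinear_blinfun_compose])

lemma deriv_sum_ident:
  "(\<Sum>i<n. (of_nat i * t ^ (i - 1) / fact i) *\<^sub>R blinfun_pow A i) = A o\<^sub>L (\<Sum>i<n - 1. eterm A t i)"
proof (induction n)
  case 0 then show ?case by simp
next
  case (Suc n)
  show ?case
  proof (cases n)
    case 0 then show ?thesis by simp
  next
    case (Suc m)
    have "(of_nat n * t ^ (n - 1) / fact n) = t ^ m / fact m"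
      using Suc by (simp add: fact_Suc field_simps del: of_nat_Suc)
    then have "(of_nat n * t ^ (n - 1) / fact n) *\<^sub>R blinfun_pow A n = A o\<^sub>L eterm A t m"
      using Suc by (simp add: eterm_def bcomp_scale)
    then show ?thesis using Suc.IH \<open>n = Suc m\<close> by (simp add: bcomp_add)
  qed
qed

lemma esum_deriv:
  "((\<lambda>t. \<Sum>i<n. eterm A t i) has_derivative (\<lambda>h. h *\<^sub>R (A o\<^sub>L (\<Sum>i<n - 1. eterm A t i)))) (at t within S)"
proof -
  have "((\<lambda>t. \<Sum>i<n. eterm A t i) has_vector_derivative
      (\<Sum>i<n. (of_nat i * t ^ (i - 1) / fact i) *\<^sub>R blinfun_pow A i)) (at t)"
    by (rule has_vector_derivative_sum) (rule eterm_deriv)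
  then show ?thesis
    unfolding deriv_sum_ident has_vector_derivative_def
    by (rule has_derivative_at_withinI)
qed

lemma bexp_deriv_ball:
  fixes A :: "'a::banach \<Rightarrow>\<^sub>L 'a"
  assumes "R > 0" "t \<in> {-R<..<R}"
  shows "((\<lambda>t. suminf (eterm A t)) has_derivative (\<lambda>h. h *\<^sub>R (A o\<^sub>L suminf (eterm A t)))) (at t)"
proof -
  let ?S = "{-R<..<R}"
  have ul: "uniform_limit ?S (\<lambda>n t. \<Sum>i<n. eterm A t i) (\<lambda>t. suminf (eterm A t)) sequentially"
  proof (rule Weierstrass_m_test)
    fix n and x :: real assume "x \<in> ?S"
    then have "\<bar>x\<bar> * norm A \<le> R * norm A" by (intro mult_right_mono) auto
    then have "(\<bar>x\<bar> * norm A) ^ n / fact n \<le> (R * norm A) ^ n / fact n"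
      by (intro divide_right_mono power_mono) auto
    then show "norm (eterm A x n) \<le> (R * norm A) ^ n / fact n"
      using eterm_norm[of A x n] by linarith
  next
    show "summable (\<lambda>n. (R * norm A) ^ n / fact n)"
      using summable_exp[of "R * norm A"] by (simp add: divide_inverse mult.commute)
  qed
  have nle: "\<forall>\<^sub>F n in sequentially. \<forall>x\<in>?S. \<forall>h. norm (h *\<^sub>R (A o\<^sub>L (\<Sum>i<n - 1. eterm A x i))
      - h *\<^sub>R (A o\<^sub>L suminf (eterm A x))) \<le> e * norm h" if e: "e > 0" for e
  proof -
    have "norm A + 1 > 0" by (smt (verit) norm_ge_zero)
    then have "e / (norm A + 1) > 0" using e by simp
    from uniform_limitD[OF ul this] obtain N where
      N: "\<And>n x. n \<ge> N \<Longrightarrow> x \<in> ?S \<Longrightarrow> dist (\<Sum>i<n. eterm A x i) (suminf (eterm A x)) < e / (norm A + 1)"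
      unfolding eventually_sequentially by blast
    show ?thesis unfolding eventually_sequentially
    proof (intro exI[of _ "Suc N"] allI impI ballI)
      fix n x h assume n: "n \<ge> Suc N" and x: "x \<in> ?S"
      have d: "norm ((\<Sum>i<n - 1. eterm A x i) - suminf (eterm A x)) \<le> e / (norm A + 1)"
        using N[of "n - 1" x] n x by (simp add: dist_norm less_imp_le)
      have "norm (h *\<^sub>R (A o\<^sub>L (\<Sum>i<n - 1. eterm A x i)) - h *\<^sub>R (A o\<^sub>L suminf (eterm A x)))
          = \<bar>h\<bar> * norm (A o\<^sub>L ((\<Sum>i<n - 1. eterm A x i) - suminf (eterm A x)))"
        by (simp add: bcomp_diff flip: scaleR_diff_right)
      also have "\<dots> \<le> \<bar>h\<bar> * (norm A * norm ((\<Sum>i<n - 1. eterm A x i) - suminf (eterm A x)))"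
        by (intro mult_left_mono norm_blinfun_compose) auto
      also have "\<dots> \<le> \<bar>h\<bar> * ((norm A + 1) * (e / (norm A + 1)))"
        by (intro mult_left_mono mult_mono d) auto
      also have "\<dots> = e * norm h" using \<open>norm A + 1 > 0\<close> by simp
      finally show "norm (h *\<^sub>R (A o\<^sub>L (\<Sum>i<n - 1. eterm A x i)) - h *\<^sub>R (A o\<^sub>L suminf (eterm A x))) \<le> e * norm h" .
    qed
  qed
  have "\<exists>g. \<forall>x\<in>?S. (\<lambda>n. \<Sum>i<n. eterm A x i) \<longlonglongrightarrow> g x \<and>
      (g has_derivative (\<lambda>h. h *\<^sub>R (A o\<^sub>L suminf (eterm A x)))) (at x within ?S)"
    apply (rule has_derivative_sequence[OF convex_real_interval(8) esum_deriv nle assms(2)])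
     apply simp
    using summable_LIMSEQ[OF eterm_summable[of A t]] by simp
  then obtain g where g: "\<And>x. x \<in> ?S \<Longrightarrow> (\<lambda>n. \<Sum>i<n. eterm A x i) \<longlonglongrightarrow> g x"
    "\<And>x. x \<in> ?S \<Longrightarrow> (g has_derivative (\<lambda>h. h *\<^sub>R (A o\<^sub>L suminf (eterm A x)))) (at x within ?S)"
    by blast
  have eq: "g x = suminf (eterm A x)" if "x \<in> ?S" for x
    using LIMSEQ_unique[OF g(1)[OF that] summable_LIMSEQ[OF eterm_summable]] .
  have "((\<lambda>t. suminf (eterm A t)) has_derivative (\<lambda>h. h *\<^sub>R (A o\<^sub>L suminf (eterm A t)))) (at t within ?S)"
    by (rule has_derivative_transform[OF assms(2) _ g(2)[OF assms(2)]]) (simp add: eq)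
  then show ?thesis using at_within_open[OF assms(2)] by simp
qed

lemma bexp_vd:
  fixes A :: "'a::banach \<Rightarrow>\<^sub>L 'a"
  shows "((\<lambda>t. blinfun_exp (t *\<^sub>R A)) has_vector_derivative (A o\<^sub>L blinfun_exp (t *\<^sub>R A))) (at t)"
  unfolding bexp_eq has_vector_derivative_def
  by (rule bexp_deriv_ball[of "\<bar>t\<bar> + 1"]) auto

lemma bexp_comm:
  fixes A :: "'a::banach \<Rightarrow>\<^sub>L 'a"
  shows "A o\<^sub>L blinfun_exp (t *\<^sub>R A) = blinfun_exp (t *\<^sub>R A) o\<^sub>L A"
proof -
  have "A o\<^sub>L suminf (eterm A t) = (\<Sum>n. A o\<^sub>L eterm A t n)"
    by (rule bounded_linear.suminf[OF bounded_bilinear.bounded_linear_right[OF bounded_bilinear_blinfun_compose] eterm_summable])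
  also have "\<dots> = (\<Sum>n. eterm A t n o\<^sub>L A)"
    by (simp add: eterm_def bcomp_scale bpow_comm bounded_bilinear.scaleR_left[OF bounded_bilinear_blinfun_compose])
  also have "\<dots> = suminf (eterm A t) o\<^sub>L A"
    by (rule bounded_linear.suminf[OF bounded_bilinear.bounded_linear_left[OF bounded_bilinear_blinfun_compose] eterm_summable, symmetric])
  finally show ?thesis unfolding bexp_eq .
qed

lemma bexp_zero:
  shows "blinfun_exp (0 *\<^sub>R A) = id_blinfun"
proof -
  have "eterm A 0 = (\<lambda>i. if i = 0 then id_blinfun else 0)"
    by (auto simp: eterm_def fun_eq_iff)
  moreover have "(\<lambda>i. if i = 0 then id_blinfun else 0) sums (id_blinfun :: 'a \<Rightarrow>\<^sub>L 'a)"
    using sums_single[of 0 "\<lambda>_. id_blinfun :: 'a \<Rightarrow>\<^sub>L 'a"] by simp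
  ultimately show ?thesis unfolding bexp_eq by (simp add: sums_iff)
qed

lemma var_const:
  fixes A :: "'x::banach \<Rightarrow>\<^sub>L 'x" and B :: "'u::real_normed_vector \<Rightarrow>\<^sub>L 'x"
  assumes dx: "\<forall>s\<ge>0. (x has_vector_derivative (A (x s) + B (u s))) (at s within {0..})"
    and t: "t \<ge> 0"
  shows "((\<lambda>s. blinfun_exp ((t - s) *\<^sub>R A) (B (u s))) has_integral (x t - blinfun_exp (t *\<^sub>R A) (x 0))) {0..t}"
proof -
  have "((\<lambda>s. blinfun_exp ((t - s) *\<^sub>R A) (B (u s))) has_integral
      (blinfun_exp ((t - t) *\<^sub>R A) (x t) - blinfun_exp ((t - 0) *\<^sub>R A) (x 0))) {0..t}"
  proof (rule fundamental_theorem_of_calculus[OF t])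
    fix s assume s: "s \<in> {0..t}"
    have d1: "((\<lambda>s. t - s) has_vector_derivative (-1)) (at s within {0..t})"
      by (auto intro!: derivative_eq_intros)
    have d2: "((\<lambda>r. blinfun_exp (r *\<^sub>R A)) has_vector_derivative (A o\<^sub>L blinfun_exp ((t - s) *\<^sub>R A)))
        (at (t - s) within (\<lambda>s. t - s) ` {0..t})"
      by (rule has_vector_derivative_at_within[OF bexp_vd])
    have dE: "((\<lambda>s. blinfun_exp ((t - s) *\<^sub>R A)) has_vector_derivative (- (A o\<^sub>L blinfun_exp ((t - s) *\<^sub>R A))))
        (at s within {0..t})"
      using vector_diff_chain_within[OF d1 d2] by (simp add: o_def)
    have dX: "(x has_vector_derivative (A (x s) + B (u s))) (at s within {0..t})"
      using dx s by (auto intro: has_vector_derivative_within_subset)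
    have "((\<lambda>s. blinfun_exp ((t - s) *\<^sub>R A) (x s)) has_vector_derivative
        (blinfun_exp ((t - s) *\<^sub>R A) (A (x s) + B (u s)) + (- (A o\<^sub>L blinfun_exp ((t - s) *\<^sub>R A))) (x s)))
        (at s within {0..t})"
      by (rule bounded_bilinear.has_vector_derivative[OF bounded_bilinear_blinfun_apply dE dX])
    moreover have "blinfun_exp ((t - s) *\<^sub>R A) (A (x s) + B (u s)) + (- (A o\<^sub>L blinfun_exp ((t - s) *\<^sub>R A))) (x s)
        = blinfun_exp ((t - s) *\<^sub>R A) (B (u s))"
    proof -
      have "(A o\<^sub>L blinfun_exp ((t - s) *\<^sub>R A)) (x s) = blinfun_exp ((t - s) *\<^sub>R A) (A (x s))"
        by (simp only: bexp_comm blinfun_apply_blinfun_compose)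
      then show ?thesis by (simp add: blinfun.add_right blinfun.minus_left)
    qed
    ultimately show "((\<lambda>s. blinfun_exp ((t - s) *\<^sub>R A) (x s)) has_vector_derivative
        blinfun_exp ((t - s) *\<^sub>R A) (B (u s))) (at s within {0..t})" by simp
  qed
  then show ?thesis using bexp_zero[of A] by simp
qed

lemma state_bound:
  fixes A :: "'x::banach \<Rightarrow>\<^sub>L 'x" and B :: "'u::real_normed_vector \<Rightarrow>\<^sub>L 'x"
  assumes a: "a \<ge> 1"
    and Eb: "\<forall>t\<ge>0. norm (blinfun_exp (t *\<^sub>R A)) \<le> a * exp (- \<alpha> * t)"
    and ab: "\<beta> < \<alpha>"
    and dx: "\<forall>s\<ge>0. (x has_vector_derivative (A (x s) + B (u s))) (at s within {0..})"
    and cu: "continuous_on {0..} u"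
    and t: "t \<ge> 0"
  defines "K \<equiv> (SUP s\<in>{0..t}. norm (exp (\<beta> * s) *\<^sub>R u s))"
  shows "exp (\<beta> * t) * norm (x t) \<le> a * norm (x 0) + a * norm B / (\<alpha> - \<beta>) * K"
    and "\<And>s. s \<in> {0..t} \<Longrightarrow> exp (\<beta> * s) * norm (u s) \<le> K"
    and "K \<ge> 0"
proof -
  have bdd: "bdd_above ((\<lambda>s. norm (exp (\<beta> * s) *\<^sub>R u s)) ` {0..t})"
  proof -
    have "continuous_on {0..t} u" using cu by (rule continuous_on_subset) auto
    then have "continuous_on {0..t} (\<lambda>s. norm (exp (\<beta> * s) *\<^sub>R u s))"
      by (intro continuous_intros)
    then have "compact ((\<lambda>s. norm (exp (\<beta> * s) *\<^sub>R u s)) ` {0..t})"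
      by (rule compact_continuous_image) simp
    then show ?thesis by (rule bounded_imp_bdd_above[OF compact_imp_bounded])
  qed
  show Ku: "exp (\<beta> * s) * norm (u s) \<le> K" if "s \<in> {0..t}" for s
    unfolding K_def using cSUP_upper[OF that bdd] by simp
  show K0: "K \<ge> 0" using Ku[of 0] t by (smt (verit) norm_ge_zero mult_nonneg_nonneg exp_gt_zero atLeastAtMost_iff)
  define c where "c = a * norm B * K"
  have c0: "c \<ge> 0" unfolding c_def using a K0 by simp
  have ab': "\<alpha> - \<beta> > 0" using ab by simp
  define g where "g s = c * exp (- \<alpha> * t) * exp ((\<alpha> - \<beta>) * s)" for s
  define G where "G s = c * exp (- \<alpha> * t) * exp ((\<alpha> - \<beta>) * s) / (\<alpha> - \<beta>)" for s
  have gint: "(g has_integral (G t - G 0)) {0..t}"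
  proof (rule fundamental_theorem_of_calculus[OF t])
    fix s assume "s \<in> {0..t}"
    show "(G has_vector_derivative g s) (at s within {0..t})"
      unfolding G_def g_def using ab'
      by (auto intro!: derivative_eq_intros simp: has_real_derivative_iff_has_vector_derivative[symmetric])
  qed
  have fint: "((\<lambda>s. blinfun_exp ((t - s) *\<^sub>R A) (B (u s))) has_integral (x t - blinfun_exp (t *\<^sub>R A) (x 0))) {0..t}"
    by (rule var_const[OF dx t])
  have le: "norm (blinfun_exp ((t - s) *\<^sub>R A) (B (u s))) \<le> g s" if s: "s \<in> {0..t}" for s
  proof -
    have "norm (blinfun_exp ((t - s) *\<^sub>R A) (B (u s))) \<le> norm (blinfun_exp ((t - s) *\<^sub>R A)) * (norm B * norm (u s))"
      by (meson norm_blinfun order_trans mult_left_mono norm_ge_zero)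
    also have "\<dots> \<le> (a * exp (- \<alpha> * (t - s))) * (norm B * norm (u s))"
      using Eb s by (intro mult_right_mono) auto
    also have "norm (u s) = exp (- \<beta> * s) * (exp (\<beta> * s) * norm (u s))"
      by (simp add: exp_minus field_simps)
    also have "\<dots> \<le> exp (- \<beta> * s) * K" using Ku[OF s] by (intro mult_left_mono) auto
    finally have "norm (blinfun_exp ((t - s) *\<^sub>R A) (B (u s))) \<le> a * exp (- \<alpha> * (t - s)) * (norm B * (exp (- \<beta> * s) * K))"
      using a by (simp add: mult_left_mono)
    also have "\<dots> = g s"
      unfolding g_def c_def by (simp add: algebra_simps flip: exp_add)
    finally show ?thesis .
  qed
  have "norm (x t - blinfun_exp (t *\<^sub>R A) (x 0)) \<le> G t - G 0"
    using integral_norm_bound_integral[OF has_integral_integrable[OF fint] has_integral_integrable[OF gint] le]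
      integral_unique[OF fint] integral_unique[OF gint] by simp
  also have "\<dots> \<le> G t" unfolding G_def using c0 ab' by simp
  also have "G t = c * exp (- \<beta> * t) / (\<alpha> - \<beta>)"
    unfolding G_def by (simp add: algebra_simps flip: exp_add)
  finally have xt: "norm (x t - blinfun_exp (t *\<^sub>R A) (x 0)) \<le> c * exp (- \<beta> * t) / (\<alpha> - \<beta>)" .
  have "norm (blinfun_exp (t *\<^sub>R A) (x 0)) \<le> a * exp (- \<alpha> * t) * norm (x 0)"
    using Eb t by (meson norm_blinfun order_trans mult_right_mono norm_ge_zero)
  with xt have "norm (x t) \<le> a * exp (- \<alpha> * t) * norm (x 0) + c * exp (- \<beta> * t) / (\<alpha> - \<beta>)"
    using norm_triangle_sub[of "x t" "blinfun_exp (t *\<^sub>R A) (x 0)"] by linarith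
  then have "exp (\<beta> * t) * norm (x t) \<le> exp (\<beta> * t) * (a * exp (- \<alpha> * t) * norm (x 0) + c * exp (- \<beta> * t) / (\<alpha> - \<beta>))"
    by (intro mult_left_mono) auto
  also have "\<dots> = a * exp ((\<beta> - \<alpha>) * t) * norm (x 0) + c / (\<alpha> - \<beta>)"
    by (simp add: algebra_simps exp_minus exp_diff exp_add divide_inverse)
  also have "\<dots> \<le> a * norm (x 0) + c / (\<alpha> - \<beta>)"
  proof -
    have "exp ((\<beta> - \<alpha>) * t) \<le> 1" using ab t by (simp add: mult_nonpos_nonneg)
    then have "exp ((\<beta> - \<alpha>) * t) * norm (x 0) \<le> 1 * norm (x 0)"
      by (intro mult_right_mono) auto
    then show ?thesis using a by (simp add: mult_left_mono)
  qed
  finally show "exp (\<beta> * t) * norm (x t) \<le> a * norm (x 0) + a * norm B / (\<alpha> - \<beta>) * K"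
    unfolding c_def by simp
qed

lemma nb: "(t::real) \<ge> 0 \<Longrightarrow> at t within {0..} \<noteq> bot"
proof
  assume "t \<ge> 0" "at t within {0..} = bot"
  moreover have "at t within {t<..} \<le> at t within {0..}" using \<open>t \<ge> 0\<close> by (intro at_le) auto
  ultimately show False using trivial_limit_at_right_real[of t] by (simp add: bot_unique)
qed

lemma input_bound0: "input_bound \<beta> 0 u t = (SUP s\<in>{0..t}. norm (exp (\<beta> * s) *\<^sub>R u s))"
  by (simp add: input_bound_def)

lemma core:
  fixes A :: "'x::banach \<Rightarrow>\<^sub>L 'x" and B :: "'u::banach \<Rightarrow>\<^sub>L 'x" and C :: "'x \<Rightarrow>\<^sub>L 'y::banach"
  assumes a: "a \<ge> 1"
    and Eb: "\<forall>t\<ge>0. norm (blinfun_exp (t *\<^sub>R A)) \<le> a * exp (- \<alpha> * t)"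
    and ab: "\<beta> < \<alpha>"
    and S: "(u, x, y) \<in> Sys A B C"
    and t: "t \<ge> 0"
  defines "K \<equiv> input_bound \<beta> 0 u t"
  shows "norm (exp (\<beta> * t) *\<^sub>R hderiv 0 x t) \<le> a * norm B / (\<alpha> - \<beta>) * K + a * norm (x 0)"
    and "norm (exp (\<beta> * t) *\<^sub>R hderiv 1 x t) \<le> (a * norm B * norm A / (\<alpha> - \<beta>) + norm B) * K + norm A * (a * norm (x 0))"
    and "hderiv 0 y t = C (hderiv 0 x t)"
    and "hderiv 1 y t = C (hderiv 1 x t)"
    and "K \<ge> 0"
proof -
  from S have cu: "continuous_on {0..} u"
    and dx: "\<forall>s\<ge>0. (x has_vector_derivative (A (x s) + B (u s))) (at s within {0..})"
    and yx: "\<forall>s\<ge>0. y s = C (x s)"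
    by (auto simp: Sys_def Cn_def)
  note sb = state_bound[OF a Eb ab dx cu t, folded input_bound0, folded K_def]
  show K0: "K \<ge> 0" by (rule sb(3))
  have ex: "exp (\<beta> * t) * norm (x t) \<le> a * norm B / (\<alpha> - \<beta>) * K + a * norm (x 0)"
    using sb(1) by simp
  then show "norm (exp (\<beta> * t) *\<^sub>R hderiv 0 x t) \<le> a * norm B / (\<alpha> - \<beta>) * K + a * norm (x 0)"
    by simp
  have h1: "hderiv 1 x t = A (x t) + B (u t)"
  proof -
    have "(x has_vector_derivative (A (x t) + B (u t))) (at t within {0..})" using dx t by simp
    then have "vector_derivative x (at t within {0..}) = A (x t) + B (u t)"
      by (rule vector_derivative_within[OF nb[OF t]])
    then show ?thesis by simp
  qed
  have "norm (exp (\<beta> * t) *\<^sub>R hderiv 1 x t) \<le> exp (\<beta> * t) * (norm A * norm (x t) + norm B * norm (u t))"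
  proof -
    have "norm (A (x t) + B (u t)) \<le> norm A * norm (x t) + norm B * norm (u t)"
      by (intro norm_triangle_le add_mono norm_blinfun)
    then show ?thesis unfolding h1 by (simp add: mult_left_mono)
  qed
  also have "\<dots> = norm A * (exp (\<beta> * t) * norm (x t)) + norm B * (exp (\<beta> * t) * norm (u t))"
    by (simp add: algebra_simps)
  also have "\<dots> \<le> norm A * (a * norm B / (\<alpha> - \<beta>) * K + a * norm (x 0)) + norm B * K"
    using sb(2)[of t] t ex by (intro add_mono mult_left_mono) auto
  also have "\<dots> = (a * norm B * norm A / (\<alpha> - \<beta>) + norm B) * K + norm A * (a * norm (x 0))"
    by (simp add: algebra_simps)
  finally show "norm (exp (\<beta> * t) *\<^sub>R hderiv 1 x t) \<le> (a * norm B * norm A / (\<alpha> - \<beta>) + norm B) * K + norm A * (a * norm (x 0))" .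
  show "hderiv 0 y t = C (hderiv 0 x t)" using yx t by simp
  have "((\<lambda>s. C (x s)) has_vector_derivative C (A (x t) + B (u t))) (at t within {0..})"
    using dx t by (auto intro: bounded_linear.has_vector_derivative[OF blinfun.bounded_linear_right])
  then have "(y has_vector_derivative C (A (x t) + B (u t))) (at t within {0..})"
    by (rule has_vector_derivative_transform[rotated 2]) (use t yx in auto)
  then show "hderiv 1 y t = C (hderiv 1 x t)"
    using vector_derivative_within[OF nb[OF t]] h1 by simp
qed

lemma gain_le:
  assumes prov: "\<forall>p\<in>S. Cn n (fst p) \<longrightarrow> Cn m (out p)"
    and M: "M \<ge> 0"
    and b: "\<forall>p\<in>S. b p \<ge> 0"
    and bd: "\<forall>p\<in>S. Cn n (fst p) \<longrightarrow> (\<forall>k\<le>m. \<forall>t\<ge>0.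
             norm (exp (\<beta> * t) *\<^sub>R hderiv k (out p) t) \<le> M * input_bound \<beta> n (fst p) t + b p)"
  shows "gain S out \<beta> n m \<le> ereal M"
proof -
  have "M \<in> {\<alpha>. \<alpha> \<ge> 0 \<and> (\<exists>b :: _ \<Rightarrow> real. (\<forall>p\<in>S. b p \<ge> 0) \<and>
          (\<forall>p\<in>S. Cn n (fst p) \<longrightarrow> (\<forall>k\<le>m. \<forall>t\<ge>0.
             norm (exp (\<beta> * t) *\<^sub>R hderiv k (out p) t) \<le> \<alpha> * input_bound \<beta> n (fst p) t + b p)))}"
    using M b bd by blast
  then show ?thesis unfolding gain_def using prov by (auto intro: Inf_lower)
qed

theorem lemma4p9:
  fixes A :: "'x::banach \<Rightarrow>\<^sub>L 'x"
    and B :: "'u::banach \<Rightarrow>\<^sub>L 'x"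
    and C :: "'x \<Rightarrow>\<^sub>L 'y::banach"
    and a \<alpha> \<beta> :: real
  assumes "a \<ge> 1"
    and "\<forall>t\<ge>0. norm (blinfun_exp (t *\<^sub>R A)) \<le> a * exp (- \<alpha> * t)"
    and "\<beta> < \<alpha>"
  shows "IS_gain (Sys A B C) \<beta> 0 1
           \<le> ereal (max (a * norm B / (\<alpha> - \<beta>)) (a * norm B * norm A / (\<alpha> - \<beta>) + norm B))
       \<and> IO_gain (Sys A B C) \<beta> 0 1
           \<le> ereal (max (a * norm B * norm C / (\<alpha> - \<beta>))
                        (a * norm B * norm A * norm C / (\<alpha> - \<beta>) + norm B * norm C))"
proof
  note hyp = assms
  have ab: "\<alpha> - \<beta> > 0" using assms(3) by simp
  define c1 where "c1 = a * norm B / (\<alpha> - \<beta>)"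
  define c2 where "c2 = a * norm B * norm A / (\<alpha> - \<beta>) + norm B"
  have c1: "c1 \<ge> 0" unfolding c1_def using ab assms(1) by simp
  have c2: "c2 \<ge> 0" unfolding c2_def using ab assms(1) by simp
  define bIS where "bIS p = a * norm (fst (snd p) 0) + norm A * (a * norm (fst (snd p) 0))" for p :: "(real \<Rightarrow> 'u) \<times> (real \<Rightarrow> 'x) \<times> (real \<Rightarrow> 'y)"
  have bIS0: "bIS p \<ge> 0" for p unfolding bIS_def using assms(1) by simp
  have key: "norm (exp (\<beta> * t) *\<^sub>R hderiv k x t) \<le> max c1 c2 * input_bound \<beta> 0 u t + bIS (u, x, y)
      \<and> norm (exp (\<beta> * t) *\<^sub>R hderiv k y t) \<le> norm C * (max c1 c2 * input_bound \<beta> 0 u t + bIS (u, x, y))"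
    if S: "(u, x, y) \<in> Sys A B C" and k: "k \<le> 1" and t: "t \<ge> 0" for u x y k t
  proof -
    note cr = core[OF hyp(1,2,3) S t]
    let ?K = "input_bound \<beta> 0 u t"
    have K0: "?K \<ge> 0" by (rule cr(5))
    have m1: "c1 * ?K \<le> max c1 c2 * ?K" and m2: "c2 * ?K \<le> max c1 c2 * ?K"
      using K0 by (auto intro: mult_right_mono)
    have nA: "0 \<le> norm A * (a * norm (x 0))" using assms(1) by simp
    have a0: "0 \<le> a * norm (x 0)" using assms(1) by simp
    have bISe: "bIS (u, x, y) = a * norm (x 0) + norm A * (a * norm (x 0))" by (simp add: bIS_def)
    have xb: "norm (exp (\<beta> * t) *\<^sub>R hderiv k x t) \<le> max c1 c2 * ?K + bIS (u, x, y)"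
    proof (cases "k = 0")
      case True
      then show ?thesis using cr(1) m1 nA bISe unfolding c1_def by simp
    next
      case False
      then have "k = 1" using k by simp
      then show ?thesis using cr(2) m2 nA bISe a0 unfolding c2_def by (simp only:)
    qed
    have yx: "hderiv k y t = C (hderiv k x t)"
      using cr(3,4) k by (cases k) auto
    have "norm (exp (\<beta> * t) *\<^sub>R hderiv k y t) = norm (C (exp (\<beta> * t) *\<^sub>R hderiv k x t))"
      unfolding yx by (simp add: blinfun.scaleR_right)
    also have "\<dots> \<le> norm C * norm (exp (\<beta> * t) *\<^sub>R hderiv k x t)" by (rule norm_blinfun)
    also have "\<dots> \<le> norm C * (max c1 c2 * ?K + bIS (u, x, y))" using xb by (simp add: mult_left_mono)
    finally show ?thesis using xb by simp
  qed
  have provIS: "\<forall>p\<in>Sys A B C. Cn 0 (fst p) \<longrightarrow> Cn 1 ((\<lambda>(u, x, y). x) p)"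
    by (auto simp: Sys_def)
  have provIO: "\<forall>p\<in>Sys A B C. Cn 0 (fst p) \<longrightarrow> Cn 1 ((\<lambda>(u, x, y). y) p)"
  proof (intro ballI impI)
    fix p assume p: "p \<in> Sys A B C"
    obtain u x y where pe: "p = (u, x, y)" by (cases p) auto
    have S: "(u, x, y) \<in> Sys A B C" using p pe by simp
    then have cx: "Cn 1 x" and cy: "Cn 0 y" by (auto simp: Sys_def)
    have e: "hderiv 1 y t = C (hderiv 1 x t)" if "t \<in> {0..}" for t
      using core(4)[OF hyp(1,2,3) S] that by simp
    have dx: "(hderiv 0 x has_vector_derivative hderiv 1 x t) (at t within {0..})" if "t \<ge> 0" for t
      using cx that unfolding Cn_def by auto
    have dy: "(hderiv 0 y has_vector_derivative hderiv 1 y t) (at t within {0..})" if t: "t \<ge> 0" for t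
    proof -
      have yx: "\<forall>s\<ge>0. y s = C (x s)" using S by (simp add: Sys_def)
      have "((\<lambda>s. C (x s)) has_vector_derivative C (hderiv 1 x t)) (at t within {0..})"
        using dx[OF t] by (auto intro: bounded_linear.has_vector_derivative[OF blinfun.bounded_linear_right])
      then have "(y has_vector_derivative C (hderiv 1 x t)) (at t within {0..})"
        by (rule has_vector_derivative_transform[rotated 2]) (use t yx in auto)
      then show ?thesis using e[of t] t by simp
    qed
    have c1x: "continuous_on {0..} (hderiv 1 x)" using cx unfolding Cn_def by auto
    have "continuous_on {0..} (\<lambda>t. C (hderiv 1 x t))"
      by (intro continuous_intros c1x)
    moreover have "continuous_on {0..} (hderiv 1 y) = continuous_on {0..} (\<lambda>t. C (hderiv 1 x t))"
      by (rule continuous_on_cong[OF refl e])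
    ultimately have c1y: "continuous_on {0..} (hderiv 1 y)" by (simp only:)
    have c0y: "continuous_on {0..} (hderiv 0 y)" using cy unfolding Cn_def by auto
    have "Cn 1 y" unfolding Cn_def
    proof (intro conjI allI impI)
      fix k :: nat and t :: real assume "k < 1" "t \<ge> 0"
      then show "(hderiv k y has_vector_derivative hderiv (Suc k) y t) (at t within {0..})"
        using dy by simp
    next
      fix k :: nat assume "k \<le> 1"
      then have "k = 0 \<or> k = 1" by auto
      then show "continuous_on {0..} (hderiv k y)" using c0y c1y by auto
    qed
    then show "Cn 1 ((\<lambda>(u, x, y). y) p)" using pe by simp
  qed
  show "IS_gain (Sys A B C) \<beta> 0 1 \<le> ereal (max (a * norm B / (\<alpha> - \<beta>)) (a * norm B * norm A / (\<alpha> - \<beta>) + norm B))"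
    unfolding IS_gain_def c1_def[symmetric] c2_def[symmetric]
  proof (rule gain_le[OF provIS])
    show "max c1 c2 \<ge> 0" using c1 by simp
    show "\<forall>p\<in>Sys A B C. bIS p \<ge> 0" using bIS0 by simp
    show "\<forall>p\<in>Sys A B C. Cn 0 (fst p) \<longrightarrow> (\<forall>k\<le>1. \<forall>t\<ge>0.
       norm (exp (\<beta> * t) *\<^sub>R hderiv k ((\<lambda>(u, x, y). x) p) t) \<le> max c1 c2 * input_bound \<beta> 0 (fst p) t + bIS p)"
      using key by auto
  qed
  have eqIO: "max (a * norm B * norm C / (\<alpha> - \<beta>)) (a * norm B * norm A * norm C / (\<alpha> - \<beta>) + norm B * norm C)
      = norm C * max c1 c2"
    unfolding c1_def c2_def by (simp add: max_mult_distrib_left algebra_simps)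
  show "IO_gain (Sys A B C) \<beta> 0 1 \<le> ereal (max (a * norm B * norm C / (\<alpha> - \<beta>))
                        (a * norm B * norm A * norm C / (\<alpha> - \<beta>) + norm B * norm C))"
    unfolding IO_gain_def eqIO
  proof (rule gain_le[OF provIO])
    show "norm C * max c1 c2 \<ge> 0" using c1 by simp
    show "\<forall>p\<in>Sys A B C. norm C * bIS p \<ge> 0" using bIS0 by simp
    show "\<forall>p\<in>Sys A B C. Cn 0 (fst p) \<longrightarrow> (\<forall>k\<le>1. \<forall>t\<ge>0.
       norm (exp (\<beta> * t) *\<^sub>R hderiv k ((\<lambda>(u, x, y). y) p) t) \<le> norm C * max c1 c2 * input_bound \<beta> 0 (fst p) t + norm C * bIS p)"
      using key by (auto simp: algebra_simps)
  qed
qed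

end
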